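(* For positive integers $r$ and integers $0\le d\le n$, let $\mathrm{Sch}_{n,d}^r$ be the set of lattice paths from $(0,n)$ to $(rn,0)$ using steps $(0,-1)$ (down), $(1,0)$ (right) and $(r,-1)$ (diagonal), never passing strictly above the line through $(0,n)$ and $(rn,0)$, and having exactly $n-d$ diagonal steps. For $\alpha\in\mathrm{Sch}_{n,d}^r$ and $1\le i\le n$, let $a_i(\alpha)$ be the $x$-coordinate of the starting point of the unique down or diagonal step of $\alpha$ going from height $n-i+1$ to height $n-i$, and set $\mathrm{aire}(\alpha)=\sum_{i=1}^n\big(r(i-1)-a_i(\alpha)\big)$. Then there is no family of functions $\mathrm{dinv}=\mathrm{dinv}_{n,d}^r:\mathrm{Sch}_{n,d}^r\to\mathbb{Z}_{\ge 0}$ (one for each $r\ge1$ and each $0\le d\le n$) such that for all $r,n,d$ both of the following hold: (i) the polynomial $S_{n,d}^r(q,t)=\sum_{\alpha\in\mathrm{Sch}_{n,d}^r}q^{\mathrm{aire}(\alpha)}t^{\mathrm{dinv}(\alpha)}$ is symmetric, i.e. $S_{n,d}^r(q,t)=S_{n,d}^r(t,q)$; (ii) there is an integer $w$ (possibly depending on $n,d,r$) with $$q^{w}\sum_{\alpha\in\mathrm{Sch}_{n,d}^r}q^{\mathrm{aire}(\alpha)-\mathrm{dinv}(\alpha)}=\frac{1}{[dr+1]_q}\binom{n}{d}_q\binom{dr+n}{n}_q .$$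
   Context: $q$-analogues: $[m]_q=1+q+\cdots+q^{m-1}$, $[m]!_q=[1]_q[2]_q\cdots[m]_q$, $\binom{m}{k}_q=\frac{[m]!_q}{[k]!_q[m-k]!_q}$. The quantity $r(i-1)-a_i(\alpha)$ is the area of row $i$ of $\alpha$ (the number of unit cells in row $i$ between the path and the line through $(0,n)$ and $(rn,0)$). *)

theory Defs
  imports Complex_Main
begin

datatype step = Down | Right | Diag

fun step_dx :: "nat \<Rightarrow> step \<Rightarrow> int" where
  "step_dx r Down = 0" | "step_dx r Right = 1" | "step_dx r Diag = int r"

fun step_dy :: "step \<Rightarrow> int" where
  "step_dy Down = -1" | "step_dy Right = 0" | "step_dy Diag = -1"

definition vx :: "nat \<Rightarrow> step list \<Rightarrow> nat \<Rightarrow> int" where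
  "vx r p k = (\<Sum>s\<leftarrow>take k p. step_dx r s)"

definition vy :: "nat \<Rightarrow> step list \<Rightarrow> nat \<Rightarrow> int" where
  "vy n p k = int n + (\<Sum>s\<leftarrow>take k p. step_dy s)"

definition Sch :: "nat \<Rightarrow> nat \<Rightarrow> nat \<Rightarrow> step list set" where
  "Sch r n d = {p. vx r p (length p) = int (r * n) \<and> vy n p (length p) = 0
      \<and> (\<forall>k\<le>length p. vx r p k + int r * vy n p k \<le> int (r * n))
      \<and> length (filter (\<lambda>s. s = Diag) p) = n - d}"

fun starts :: "nat \<Rightarrow> nat \<Rightarrow> step list \<Rightarrow> nat list" where
  "starts r x [] = []"
| "starts r x (Right # p) = starts r (x + 1) p"
| "starts r x (Down # p) = x # starts r x p"
| "starts r x (Diag # p) = x # starts r (x + r) p"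

definition a_coord :: "nat \<Rightarrow> step list \<Rightarrow> nat \<Rightarrow> nat" where
  "a_coord r p i = starts r 0 p ! (i - 1)"

definition aire :: "nat \<Rightarrow> nat \<Rightarrow> step list \<Rightarrow> int" where
  "aire r n p = (\<Sum>i=1..n. int (r * (i - 1)) - int (a_coord r p i))"

definition qint :: "nat \<Rightarrow> real \<Rightarrow> real" where
  "qint m q = (\<Sum>k<m. q ^ k)"

definition qfact :: "nat \<Rightarrow> real \<Rightarrow> real" where
  "qfact m q = (\<Prod>k=1..m. qint k q)"

definition qbinom :: "nat \<Rightarrow> nat \<Rightarrow> real \<Rightarrow> real" where
  "qbinom m k q = qfact m q / (qfact k q * qfact (m - k) q)"

definition Spoly :: "(step list \<Rightarrow> nat) \<Rightarrow> nat \<Rightarrow> nat \<Rightarrow> nat \<Rightarrow> real \<Rightarrow> real \<Rightarrow> real" where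
  "Spoly dinv r n d q t = (\<Sum>\<alpha>\<in>Sch r n d. q powi aire r n \<alpha> * t ^ dinv \<alpha>)"

end

theory Submission
  imports Defs
begin

lemma step_len: "int (length p) \<le> (\<Sum>s\<leftarrow>p. step_dx r s - step_dy s)"
proof (induction p)
  case (Cons s p) then show ?case by (cases s) auto
qed simp

lemma finite_Sch: "finite (Sch r n d)"
proof -
  have "Sch r n d \<subseteq> {p. set p \<subseteq> UNIV \<and> length p \<le> r * n + n}"
  proof
    fix p assume "p \<in> Sch r n d"
    then have e: "vx r p (length p) = int (r*n)" "vy n p (length p) = 0" by (auto simp: Sch_def)
    have "(\<Sum>s\<leftarrow>p. step_dx r s - step_dy s) = (\<Sum>s\<leftarrow>p. step_dx r s) - (\<Sum>s\<leftarrow>p. step_dy s)"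
      by (simp add: sum_list_subtractf)
    also have "\<dots> = int (r*n) + int n" using e by (simp add: vx_def vy_def)
    finally have "int (length p) \<le> int (r*n + n)" using step_len[of p r] by simp
    then have "length p \<le> r*n+n" by (simp only: of_nat_le_iff)
    then show "p \<in> {p. set p \<subseteq> UNIV \<and> length p \<le> r * n + n}" by simp
  qed
  moreover have "finite {p. set p \<subseteq> (UNIV :: step set) \<and> length p \<le> r * n + n}"
  proof -
    have "(UNIV :: step set) = {Down, Right, Diag}" using step.exhaust by auto
    then have "finite (UNIV :: step set)" by (metis finite.emptyI finite.insertI)
    then show ?thesis using finite_lists_length_le[of "UNIV :: step set" "r*n+n"] by simp
  qed
  ultimately show ?thesis by (rule finite_subset)
qed

lemma deriv_sum_powi:
  assumes "finite A"
  shows "((\<lambda>q::real. \<Sum>\<alpha>\<in>A. q powi e \<alpha>) has_field_derivative (\<Sum>\<alpha>\<in>A. of_int (e \<alpha>))) (at 1)"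
proof -
  have "((\<lambda>q::real. \<Sum>\<alpha>\<in>A. q powi e \<alpha>) has_field_derivative
        (\<Sum>\<alpha>\<in>A. of_int (e \<alpha>) * 1 powi (e \<alpha> - 1) * 1)) (at 1)"
    by (intro DERIV_sum DERIV_power_int DERIV_ident) simp
  then show ?thesis by simp
qed

lemma rhs_eq:
  assumes "(q::real) > 0"
  shows "(1 / qint (1 * 2 + 1) q) * qbinom 2 1 q * qbinom (1 * 2 + 2) 2 q = (1 + q) * (1 + q^2)"
proof -
  have i3: "qint 3 q = 1 + q + q^2" by (simp add: qint_def numeral_eq_Suc lessThan_Suc power2_eq_square)
  have p: "1 + q + q^2 > 0" using assms by (simp add: add_pos_nonneg)
  have f1: "qfact 1 q = 1" by (simp add: qfact_def qint_def)
  have f2: "qfact 2 q = 1 + q" by (simp add: qfact_def qint_def numeral_eq_Suc lessThan_Suc)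
  have f4: "qfact 4 q = (1 + q) * (1 + q + q^2) * (1 + q + q^2 + q^3)"
    by (simp add: qfact_def qint_def numeral_eq_Suc lessThan_Suc atLeastAtMostSuc_conv
        power2_eq_square power3_eq_cube algebra_simps)
  have nz: "(1 + q + q^2) * ((1 + q) * (1 + q)) \<noteq> 0" using p assms by simp
  have "(1 / qint (1 * 2 + 1) q) * qbinom 2 1 q * qbinom (1 * 2 + 2) 2 q
      = ((1 + q) * ((1 + q) * (1 + q + q^2) * (1 + q + q^2 + q^3))) / ((1 + q + q^2) * ((1+q)*(1+q)))"
    using i3 f1 f2 f4 by (simp add: qbinom_def)
  also have "\<dots> = (1 + q) * (1 + q^2)"
    using nz by (subst nonzero_divide_eq_eq) (auto simp: algebra_simps power2_eq_square power3_eq_cube)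
  finally show ?thesis .
qed

theorem mainTheorem1:
  shows "\<not> (\<exists>dinv :: nat \<Rightarrow> nat \<Rightarrow> nat \<Rightarrow> step list \<Rightarrow> nat.
            \<forall>r n d. r \<ge> 1 \<and> d \<le> n \<longrightarrow>
              (\<forall>q t. Spoly (dinv r n d) r n d q t = Spoly (dinv r n d) r n d t q)
            \<and> (\<exists>w::int. \<forall>q::real. q > 0 \<longrightarrow>
                 q powi w * (\<Sum>\<alpha>\<in>Sch r n d. q powi (aire r n \<alpha> - int (dinv r n d \<alpha>)))
                 = (1 / qint (d * r + 1) q) * qbinom n d q * qbinom (d * r + n) n q))"
proof
  assume "\<exists>dinv :: nat \<Rightarrow> nat \<Rightarrow> nat \<Rightarrow> step list \<Rightarrow> nat.
            \<forall>r n d. r \<ge> 1 \<and> d \<le> n \<longrightarrow>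
              (\<forall>q t. Spoly (dinv r n d) r n d q t = Spoly (dinv r n d) r n d t q)
            \<and> (\<exists>w::int. \<forall>q::real. q > 0 \<longrightarrow>
                 q powi w * (\<Sum>\<alpha>\<in>Sch r n d. q powi (aire r n \<alpha> - int (dinv r n d \<alpha>)))
                 = (1 / qint (d * r + 1) q) * qbinom n d q * qbinom (d * r + n) n q)"
  then obtain dinv :: "nat \<Rightarrow> nat \<Rightarrow> nat \<Rightarrow> step list \<Rightarrow> nat" where H:
    "\<forall>r n d. r \<ge> 1 \<and> d \<le> n \<longrightarrow>
              (\<forall>q t. Spoly (dinv r n d) r n d q t = Spoly (dinv r n d) r n d t q)
            \<and> (\<exists>w::int. \<forall>q::real. q > 0 \<longrightarrow>
                 q powi w * (\<Sum>\<alpha>\<in>Sch r n d. q powi (aire r n \<alpha> - int (dinv r n d \<alpha>)))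
                 = (1 / qint (d * r + 1) q) * qbinom n d q * qbinom (d * r + n) n q)" by blast
  define A where "A = Sch 2 2 1"
  define a where "a = aire 2 2"
  define D where "D = dinv 2 2 1"
  have finA: "finite A" unfolding A_def by (rule finite_Sch)
  from H[rule_format, of 2 1 2] have
    sym: "\<And>q t. Spoly D 2 2 1 q t = Spoly D 2 2 1 t q" and
    ex: "\<exists>w::int. \<forall>q::real. q > 0 \<longrightarrow>
                 q powi w * (\<Sum>\<alpha>\<in>A. q powi (a \<alpha> - int (D \<alpha>)))
                 = (1 / qint (1 * 2 + 1) q) * qbinom 2 1 q * qbinom (1 * 2 + 2) 2 q"
    unfolding A_def a_def D_def by auto
  have feq: "(\<lambda>q::real. \<Sum>\<alpha>\<in>A. q powi a \<alpha>) = (\<lambda>q. \<Sum>\<alpha>\<in>A. q powi int (D \<alpha>))"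
  proof
    fix q :: real
    have "Spoly D 2 2 1 q 1 = Spoly D 2 2 1 1 q" by (rule sym)
    then show "(\<Sum>\<alpha>\<in>A. q powi a \<alpha>) = (\<Sum>\<alpha>\<in>A. q powi int (D \<alpha>))"
      by (simp add: Spoly_def A_def a_def power_int_of_nat)
  qed
  have d1: "((\<lambda>q::real. \<Sum>\<alpha>\<in>A. q powi a \<alpha>) has_field_derivative (\<Sum>\<alpha>\<in>A. of_int (a \<alpha>))) (at 1)"
    by (rule deriv_sum_powi[OF finA])
  have d2: "((\<lambda>q::real. \<Sum>\<alpha>\<in>A. q powi a \<alpha>) has_field_derivative (\<Sum>\<alpha>\<in>A. of_int (int (D \<alpha>)))) (at 1)"
    unfolding feq by (rule deriv_sum_powi[OF finA])
  have sumeq: "(\<Sum>\<alpha>\<in>A. (of_int (a \<alpha>)::real)) = (\<Sum>\<alpha>\<in>A. of_int (int (D \<alpha>)))"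
    using DERIV_unique[OF d1 d2] .
  define h where "h = (\<lambda>q::real. \<Sum>\<alpha>\<in>A. q powi (a \<alpha> - int (D \<alpha>)))"
  have dh: "(h has_field_derivative (\<Sum>\<alpha>\<in>A. of_int (a \<alpha> - int (D \<alpha>)))) (at 1)"
    unfolding h_def by (rule deriv_sum_powi[OF finA])
  have dh0: "(\<Sum>\<alpha>\<in>A. (of_int (a \<alpha> - int (D \<alpha>))::real)) = 0"
    using sumeq by (simp add: sum_subtractf)
  from ex obtain w :: int where W: "\<And>q::real. q > 0 \<Longrightarrow> q powi w * h q = (1 + q) * (1 + q^2)"
    using rhs_eq unfolding h_def by auto
  have h1: "h 1 = 4" using W[of 1] by simp
  have dh': "(h has_field_derivative 0) (at 1)" using dh dh0 by simp
  have pw: "((\<lambda>q::real. q powi w) has_field_derivative (of_int w * 1 powi (w-1) * 1)) (at 1)"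
    by (rule DERIV_power_int[OF DERIV_ident]) simp
  have dl: "((\<lambda>q. q powi w * h q) has_field_derivative
      (of_int w * 1 powi (w - 1) * 1 * h 1 + 0 * 1 powi w)) (at 1)"
    by (rule DERIV_mult[OF pw dh'])
  have p2: "((\<lambda>q::real. q^2) has_field_derivative (of_nat 2 * 1^(2-1)*1)) (at 1)"
    using DERIV_pow[of 2 "1::real"] by simp
  have dr0: "((\<lambda>q::real. (1 + q) * (1 + q^2)) has_field_derivative
      ((0 + 1) * (1 + 1^2) + (0 + of_nat 2 * 1 ^ (2 - 1) * 1) * (1 + 1))) (at 1)"
    by (intro DERIV_mult DERIV_add DERIV_const DERIV_ident p2)
  have dr: "((\<lambda>q. q powi w * h q) has_field_derivative 6) (at 1)"
    by (rule has_field_derivative_transform_within_open[of _ _ _ "{0<..}"])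
       (use dr0 W in auto)
  have "of_int w * 4 = (6::real)" using DERIV_unique[OF dl dr] h1 by simp
  then have "w * 4 = 6" by linarith
  then show False by presburger
qed

end
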